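(* Let $X$ and $Y$ be Banach spaces, $S\in\mathcal{L}(X,Y)$, $F\subset X$ bounded and convex, and $n\in\mathbb{N}_0$. Then $e_n^{\text{det-non-mb}}(S,F)\le 8\,e_n^{\text{det-non}}(S,F)$.
   Context: A deterministic non-adaptive algorithm with $n$ measurements is a map $A_n=\phi\circ(L_1,\dots,L_n)\colon F\to Y$ with fixed $L_1,\dots,L_n\in X'$ and arbitrary $\phi\colon\mathbb{R}^n\to Y$; its error is $\sup_{f\in F}\|S(f)-A_n(f)\|$. $e_n^{\text{det-non}}(S,F)$ is the infimum of the error over all such algorithms, and $e_n^{\text{det-non-mb}}(S,F)$ is the infimum over those such algorithms that are $(\mathcal{B}_F,\mathcal{B}_Y)$-measurable, where $\mathcal{B}_Y$ is the Borel $\sigma$-algebra of $Y$ and $\mathcal{B}_F$ the Borel $\sigma$-algebra on $F$ of the seminorm whose unit ball is $F-F$. *)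

theory Defs
  imports "HOL-Analysis.Analysis" "HOL-Library.Extended_Nonnegative_Real"
begin

text \<open>Minkowski functional (gauge) of a set K; for K = F - F this is the
  seminorm whose unit ball is F - F. Only evaluated on F - F below.\<close>
definition minkowski :: "'a::real_vector set \<Rightarrow> 'a \<Rightarrow> real" where
  "minkowski K x = Inf {t. t > 0 \<and> x \<in> (\<lambda>y. t *\<^sub>R y) ` K}"

definition diffset :: "'a::real_vector set \<Rightarrow> 'a set" where
  "diffset F = {x - y | x y. x \<in> F \<and> y \<in> F}"

definition F_open :: "'a::real_vector set \<Rightarrow> 'a set \<Rightarrow> bool" where
  "F_open F U \<longleftrightarrow> U \<subseteq> F \<and>
     (\<forall>x\<in>U. \<exists>r>0. \<forall>y\<in>F. minkowski (diffset F) (y - x) < r \<longrightarrow> y \<in> U)"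

definition borel_F :: "'a::real_vector set \<Rightarrow> 'a set set" where
  "borel_F F = sigma_sets F {U. F_open F U}"

definition F_measurable :: "'a::real_vector set \<Rightarrow> ('a \<Rightarrow> 'b::topological_space) \<Rightarrow> bool" where
  "F_measurable F A \<longleftrightarrow> (\<forall>B \<in> sets borel. {f \<in> F. A f \<in> B} \<in> borel_F F)"

definition det_non_algs :: "nat \<Rightarrow> ('a::real_normed_vector \<Rightarrow> 'b) set" where
  "det_non_algs n = {(\<lambda>f. \<phi> (map (\<lambda>i. L i f) [0..<n])) | \<phi> L.
      \<forall>i<n. bounded_linear (L i :: 'a \<Rightarrow> real)}"

definition worst_err :: "('a \<Rightarrow> 'b::real_normed_vector) \<Rightarrow> 'a set \<Rightarrow> ('a \<Rightarrow> 'b) \<Rightarrow> ennreal" where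
  "worst_err S F A = (SUP f\<in>F. ennreal (norm (S f - A f)))"

definition e_det_non :: "nat \<Rightarrow> ('a::real_normed_vector \<Rightarrow> 'b::real_normed_vector) \<Rightarrow> 'a set \<Rightarrow> ennreal" where
  "e_det_non n S F = (INF A\<in>det_non_algs n. worst_err S F A)"

definition e_det_non_mb :: "nat \<Rightarrow> ('a::real_normed_vector \<Rightarrow> 'b::real_normed_vector) \<Rightarrow> 'a set \<Rightarrow> ennreal" where
  "e_det_non_mb n S F = (INF A\<in>{A \<in> det_non_algs n. F_measurable F A}. worst_err S F A)"

end

theory Submission
  imports Defs
begin

definition LC :: "(nat \<Rightarrow> 'a \<Rightarrow> real) \<Rightarrow> nat \<Rightarrow> ('a \<Rightarrow> real) set" where
  "LC L n = {\<Lambda>. \<exists>\<beta>. \<forall>w. \<Lambda> w = (\<Sum>k<n. \<beta> k * L k w)}"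

lemma LC_zero: "(\<lambda>w. 0) \<in> LC L n"
  unfolding LC_def by (rule CollectI, rule exI[of _ "\<lambda>_. 0"]) simp

lemma LC_add: "\<Lambda>1 \<in> LC L n \<Longrightarrow> \<Lambda>2 \<in> LC L n \<Longrightarrow> (\<lambda>w. \<Lambda>1 w + \<Lambda>2 w) \<in> LC L n"
  unfolding LC_def
proof (clarify)
  fix \<beta>1 \<beta>2 assume "\<forall>w. \<Lambda>1 w = (\<Sum>k<n. \<beta>1 k * L k w)" "\<forall>w. \<Lambda>2 w = (\<Sum>k<n. \<beta>2 k * L k w)"
  then show "\<exists>\<beta>. \<forall>w. \<Lambda>1 w + \<Lambda>2 w = (\<Sum>k<n. \<beta> k * L k w)"
    by (intro exI[of _ "\<lambda>k. \<beta>1 k + \<beta>2 k"]) (simp add: distrib_right sum.distrib)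
qed

lemma LC_scale: "\<Lambda> \<in> LC L n \<Longrightarrow> (\<lambda>w. c * \<Lambda> w) \<in> LC L n"
  unfolding LC_def
proof (clarify)
  fix \<beta> assume "\<forall>w. \<Lambda> w = (\<Sum>k<n. \<beta> k * L k w)"
  then show "\<exists>\<beta>'. \<forall>w. c * \<Lambda> w = (\<Sum>k<n. \<beta>' k * L k w)"
    by (intro exI[of _ "\<lambda>k. c * \<beta> k"]) (simp add: sum_distrib_left mult.assoc)
qed

lemma LC_diff: "\<Lambda>1 \<in> LC L n \<Longrightarrow> \<Lambda>2 \<in> LC L n \<Longrightarrow> (\<lambda>w. \<Lambda>1 w - \<Lambda>2 w) \<in> LC L n"
  using LC_add[of \<Lambda>1 L n "\<lambda>w. (-1) * \<Lambda>2 w"] LC_scale[of \<Lambda>2 L n "-1"] by simp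

lemma LC_sum: fixes m :: nat shows "(\<And>j. j < m \<Longrightarrow> \<Lambda> j \<in> LC L n) \<Longrightarrow> (\<lambda>w. \<Sum>j<m. c j * \<Lambda> j w) \<in> LC L n"
proof (induction m)
  case 0 then show ?case using LC_zero by simp
next
  case (Suc m)
  have "(\<lambda>w. (\<Sum>j<m. c j * \<Lambda> j w) + c m * \<Lambda> m w) \<in> LC L n"
    using Suc by (intro LC_add LC_scale) auto
  then show ?case by simp
qed

lemma LC_mono: "\<Lambda> \<in> LC L n \<Longrightarrow> \<Lambda> \<in> LC L (Suc n)"
  unfolding LC_def
proof (clarify)
  fix \<beta> assume "\<forall>w. \<Lambda> w = (\<Sum>k<n. \<beta> k * L k w)"
  then show "\<exists>\<beta>'. \<forall>w. \<Lambda> w = (\<Sum>k<Suc n. \<beta>' k * L k w)"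
  proof (intro exI[of _ "\<beta>(n := 0)"] allI)
    fix w assume "\<forall>w. \<Lambda> w = (\<Sum>k<n. \<beta> k * L k w)"
    moreover have "(\<Sum>k<n. \<beta> k * L k w) = (\<Sum>k<n. (\<beta>(n := 0)) k * L k w)"
      by (rule sum.cong) auto
    ultimately show "\<Lambda> w = (\<Sum>k<Suc n. (\<beta>(n := 0)) k * L k w)" by simp
  qed
qed

lemma LC_L: "i < n \<Longrightarrow> L i \<in> LC L n"
  unfolding LC_def
proof (clarify, intro exI[of _ "\<lambda>k. if k = i then 1 else 0"] allI)
  fix w assume "i < n"
  then show "L i w = (\<Sum>k<n. (if k = i then 1 else 0) * L k w)"
  proof -
    have "(\<Sum>k<n. (if k = i then 1 else 0) * L k w) = (\<Sum>k<n. if k = i then L k w else 0)"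
      by (rule sum.cong) auto
    then show ?thesis using \<open>i < n\<close> by simp
  qed
qed

lemma LC_bl:
  assumes "\<Lambda> \<in> LC L n" "\<forall>i<n. bounded_linear (L i)"
  shows "bounded_linear \<Lambda>"
proof -
  obtain \<beta> where b: "\<forall>w. \<Lambda> w = (\<Sum>k<n. \<beta> k * L k w)" using assms(1) unfolding LC_def by auto
  have "bounded_linear (\<lambda>w. \<Sum>k\<in>{..<n}. \<beta> k * L k w)"
    by (rule bounded_linear_sum) (use assms(2) in \<open>auto intro: bounded_linear_compose[OF bounded_linear_mult_right]\<close>)
  moreover have "\<Lambda> = (\<lambda>w. \<Sum>k\<in>{..<n}. \<beta> k * L k w)" using b by auto
  ultimately show ?thesis by simp
qed

lemma reduce:
  fixes L :: "nat \<Rightarrow> 'a \<Rightarrow> real" and D :: "'a set"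
  shows "\<exists>(m::nat) u \<Lambda>. (\<forall>j<m. u j \<in> D \<and> \<Lambda> j \<in> LC L n) \<and>
     (\<forall>w\<in>D. \<forall>i<n. L i w = (\<Sum>j<m. \<Lambda> j w * L i (u j)))"
proof (induction n)
  case 0 then show ?case by (intro exI[of _ "0::nat"] exI[of _ "\<lambda>_. undefined"]) simp
next
  case (Suc n)
  then obtain m :: nat and u \<Lambda> where H1: "\<forall>j<m. u j \<in> D \<and> \<Lambda> j \<in> LC L n"
    and H2: "\<forall>w\<in>D. \<forall>i<n. L i w = (\<Sum>j<m. \<Lambda> j w * L i (u j))" by blast
  define R where "R w = L n w - (\<Sum>j<m. \<Lambda> j w * L n (u j))" for w
  show ?case
  proof (cases "\<forall>w\<in>D. R w = 0")
    case True
    show ?thesis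
    proof (intro exI[of _ m] exI[of _ u] exI[of _ \<Lambda>] conjI ballI allI impI)
      fix j assume "j < m" then show "u j \<in> D" "\<Lambda> j \<in> LC L (Suc n)" using H1 LC_mono by auto
    next
      fix w i assume "w \<in> D" "i < Suc n"
      then show "L i w = (\<Sum>j<m. \<Lambda> j w * L i (u j))"
        using H2 True unfolding R_def by (cases "i = n") auto
    qed
  next
    case False
    then obtain w0 where w0: "w0 \<in> D" "R w0 \<noteq> 0" by blast
    define \<Lambda>N where "\<Lambda>N w = R w / R w0" for w
    define \<Lambda>' where "\<Lambda>' j w = (if j < m then \<Lambda> j w - \<Lambda> j w0 * \<Lambda>N w else \<Lambda>N w)" for j w
    define u' where "u' = u(m := w0)"
    have LN: "\<Lambda>N \<in> LC L (Suc n)"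
    proof -
      have "(\<lambda>w. (1 / R w0) * (L n w - (\<Sum>j<m. L n (u j) * \<Lambda> j w))) \<in> LC L (Suc n)"
        using H1 by (intro LC_scale LC_diff LC_L LC_sum LC_mono) auto
      then show ?thesis unfolding \<Lambda>N_def R_def by (simp add: mult.commute)
    qed
    show ?thesis
    proof (intro exI[of _ "Suc m"] exI[of _ u'] exI[of _ \<Lambda>'] conjI ballI allI impI)
      fix j assume "j < Suc m"
      then show "u' j \<in> D" using H1 w0 unfolding u'_def by (auto simp: less_Suc_eq)
      show "\<Lambda>' j \<in> LC L (Suc n)"
      proof (cases "j < m")
        case True
        then have "\<Lambda> j \<in> LC L (Suc n)" using H1 LC_mono by blast
        then have "(\<lambda>w. \<Lambda> j w - \<Lambda> j w0 * \<Lambda>N w) \<in> LC L (Suc n)"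
          using LN by (intro LC_diff LC_scale)
        then show ?thesis using True unfolding \<Lambda>'_def by simp
      next
        case False
        then show ?thesis using LN unfolding \<Lambda>'_def by (simp add: fun_eq_iff cong: if_cong)
      qed
    next
      fix w i assume w: "w \<in> D" and i: "i < Suc n"
      have eq: "(\<Sum>j<Suc m. \<Lambda>' j w * L i (u' j)) =
          (\<Sum>j<m. \<Lambda> j w * L i (u j)) - \<Lambda>N w * (\<Sum>j<m. \<Lambda> j w0 * L i (u j)) + \<Lambda>N w * L i w0"
        unfolding \<Lambda>'_def u'_def
        by (simp add: sum_distrib_left algebra_simps sum_subtractf)
      show "L i w = (\<Sum>j<Suc m. \<Lambda>' j w * L i (u' j))"
      proof (cases "i = n")
        case True
        have "\<Lambda>N w * R w0 = R w" unfolding \<Lambda>N_def using w0 by simp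
        then show ?thesis unfolding eq using True unfolding R_def by (simp add: algebra_simps)
      next
        case False
        then have "i < n" using i by simp
        then show ?thesis unfolding eq using H2 w w0 by simp
      qed
    qed
  qed
qed

lemma F_open_preimage:
  fixes \<Lambda> :: "'a::real_normed_vector \<Rightarrow> real"
  assumes bl: "bounded_linear \<Lambda>" and bF: "bounded F" and S: "open S"
  shows "F_open F {x\<in>F. \<Lambda> x \<in> S}"
  unfolding F_open_def
proof (intro conjI ballI)
  show "{x \<in> F. \<Lambda> x \<in> S} \<subseteq> F" by auto
  fix x assume x: "x \<in> {x \<in> F. \<Lambda> x \<in> S}"
  obtain R where R: "\<forall>y\<in>F. norm y \<le> R" using bF bounded_iff by auto
  obtain K where K: "K > 0" "\<forall>y. norm (\<Lambda> y) \<le> norm y * K" using bounded_linear.pos_bounded[OF bl] by auto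
  obtain \<epsilon> where e: "\<epsilon> > 0" "ball (\<Lambda> x) \<epsilon> \<subseteq> S" using S x open_contains_ball by blast
  have R0: "R \<ge> 0" using R x norm_ge_zero order_trans by blast
  define r where "r = \<epsilon> / (K * (2 * R) + 1)"
  have dpos: "K * (2 * R) + 1 > 0" using K R0 by (smt (verit) mult_nonneg_nonneg)
  have r: "r > 0" unfolding r_def using e dpos by simp
  show "\<exists>r>0. \<forall>y\<in>F. minkowski (diffset F) (y - x) < r \<longrightarrow> y \<in> {x \<in> F. \<Lambda> x \<in> S}"
  proof (intro exI[of _ r] conjI r ballI impI)
    fix y assume y: "y \<in> F" and m: "minkowski (diffset F) (y - x) < r"
    let ?T = "{t. t > 0 \<and> y - x \<in> (\<lambda>z. t *\<^sub>R z) ` diffset F}"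
    have "1 \<in> ?T" using x y unfolding diffset_def by auto
    then obtain t where t: "t \<in> ?T" "t < r" using cInf_lessD[of ?T r] m unfolding minkowski_def by blast
    then obtain d where d: "d \<in> diffset F" "y - x = t *\<^sub>R d" by auto
    have nd: "norm d \<le> 2 * R"
    proof -
      obtain a b where "a \<in> F" "b \<in> F" "d = a - b" using d(1) unfolding diffset_def by auto
      moreover from this R have "norm a \<le> R" "norm b \<le> R" by auto
      ultimately show ?thesis using norm_triangle_ineq4[of a b] by simp
    qed
    have "\<bar>\<Lambda> y - \<Lambda> x\<bar> = \<bar>t * \<Lambda> d\<bar>"
      using d(2) linear_diff[OF bounded_linear.linear[OF bl], of y x] linear_scale[OF bounded_linear.linear[OF bl], of t d] by simp
    also have "\<dots> = t * \<bar>\<Lambda> d\<bar>" using t by (simp add: abs_mult)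
    also have "\<dots> \<le> t * (norm d * K)" using K(2)[rule_format, of d] t by (intro mult_left_mono) auto
    also have "\<dots> \<le> t * (K * (2 * R))" using nd K t by (intro mult_left_mono) (auto simp: mult.commute)
    also have "\<dots> < r * (K * (2 * R) + 1)"
    proof -
      have "t * (K * (2 * R)) \<le> r * (K * (2 * R))" using t K R0 by (intro mult_right_mono) auto
      also have "\<dots> < r * (K * (2 * R) + 1)" using r by simp
      finally show ?thesis .
    qed
    also have "\<dots> = \<epsilon>" unfolding r_def using dpos by simp
    finally have "\<Lambda> y \<in> ball (\<Lambda> x) \<epsilon>" by (simp add: dist_norm abs_minus_commute)
    then show "y \<in> {x \<in> F. \<Lambda> x \<in> S}" using e y by auto
  qed
qed

definition MF :: "'a::real_vector set \<Rightarrow> 'a measure" where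
  "MF F = measure_of F {U. F_open F U} (\<lambda>_. 0)"

lemma MF_space: "space (MF F) = F"
  unfolding MF_def by (rule space_measure_of) (auto simp: F_open_def)

lemma MF_sets: "sets (MF F) = borel_F F"
  unfolding MF_def borel_F_def by (rule sets_measure_of) (auto simp: F_open_def)

lemma MF_meas:
  fixes \<Lambda> :: "'a::real_normed_vector \<Rightarrow> real"
  assumes bl: "bounded_linear \<Lambda>" and bF: "bounded F"
  shows "\<Lambda> \<in> borel_measurable (MF F)"
proof (rule borel_measurableI)
  fix S :: "real set" assume "open S"
  then have "F_open F {x\<in>F. \<Lambda> x \<in> S}" using F_open_preimage[OF bl bF] by blast
  then have "{x\<in>F. \<Lambda> x \<in> S} \<in> borel_F F" unfolding borel_F_def by (auto intro: sigma_sets.Basic)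
  moreover have "\<Lambda> -` S \<inter> space (MF F) = {x\<in>F. \<Lambda> x \<in> S}" using MF_space by auto
  ultimately show "\<Lambda> -` S \<inter> space (MF F) \<in> sets (MF F)" using MF_sets by metis
qed

lemma MF_F_measurable:
  assumes "(\<lambda>f. A f) \<in> borel_measurable (MF F)"
  shows "F_measurable F A"
  unfolding F_measurable_def
proof
  fix B :: "'b set" assume "B \<in> sets borel"
  then have "A -` B \<inter> space (MF F) \<in> sets (MF F)" using assms measurable_sets by blast
  moreover have "A -` B \<inter> space (MF F) = {f\<in>F. A f \<in> B}" using MF_space by auto
  ultimately show "{f\<in>F. A f \<in> B} \<in> borel_F F" using MF_sets by metis
qed

lemma close_lemma:
  fixes S :: "'a::real_normed_vector \<Rightarrow> 'b::real_normed_vector" and L :: "nat \<Rightarrow> 'a \<Rightarrow> real"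
    and m :: nat and \<phi> :: "real list \<Rightarrow> 'b"
  assumes S: "bounded_linear S" and Lb: "\<forall>i<n. bounded_linear (L i)" and cvx: "convex F"
    and c0: "c0 \<in> F" and pq: "\<forall>j<m. p j \<in> F \<and> q j \<in> F"
    and rep: "\<forall>f\<in>F. \<forall>g\<in>F. \<forall>i<n. L i (f - g) = (\<Sum>j<m. \<Lambda> j (f - g) * L i (p j - q j))"
    and Llin: "\<forall>j<m. bounded_linear (\<Lambda> j)"
    and err: "\<forall>f\<in>F. norm (S f - \<phi> (map (\<lambda>i. L i f) [0..<n])) \<le> e"
    and B: "\<forall>x\<in>F. \<forall>y\<in>F. norm (S x - S y) \<le> B"
    and lam: "0 < la" "la < 1" and mu: "\<mu> = (1 - la) / la" and de: "\<delta> = 1 / ((2 * real m + 1) * \<mu>)"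
    and f: "f \<in> F" and g: "g \<in> F" and cl: "\<forall>j<m. \<bar>\<Lambda> j f - \<Lambda> j g\<bar> \<le> \<delta>"
  shows "norm (S f - S g) \<le> 2 * e + 2 * la * B"
proof -
  define M where "M = 2 * real m + 1"
  have M: "M > 0" unfolding M_def by simp
  have mupos: "\<mu> > 0" unfolding mu using lam by simp
  have lm: "la * \<mu> = 1 - la" unfolding mu using lam by simp
  define a where "a j = \<mu> * (\<Lambda> j f - \<Lambda> j g)" for j
  define \<theta> where "\<theta> j = 1/2 + a j * M / 2" for j
  have aj: "\<bar>a j\<bar> * M \<le> 1" if "j < m" for j
  proof -
    have "\<bar>a j\<bar> = \<mu> * \<bar>\<Lambda> j f - \<Lambda> j g\<bar>" unfolding a_def using mupos by (simp add: abs_mult)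
    also have "\<dots> \<le> \<mu> * \<delta>" using cl that mupos by (intro mult_left_mono) auto
    also have "\<dots> = 1 / M" unfolding de M_def using mupos by simp
    finally show ?thesis using M by (simp add: field_simps)
  qed
  have th: "0 \<le> \<theta> j \<and> \<theta> j \<le> 1" if "j < m" for j
  proof -
    have "\<bar>M * a j\<bar> \<le> 1" using aj[OF that] M by (simp add: abs_mult mult.commute)
    then have "-1 \<le> M * a j" "M * a j \<le> 1" by (auto simp: abs_le_iff)
    then show ?thesis unfolding \<theta>_def by (auto simp: field_simps)
  qed
  define cc where "cc t = (1/M) *\<^sub>R c0 + (\<Sum>j<m. (2/M) *\<^sub>R (t j *\<^sub>R p j + (1 - t j) *\<^sub>R q j))" for t :: "nat \<Rightarrow> real"
  have cc_in: "cc t \<in> F" if t: "\<forall>j<m. 0 \<le> t j \<and> t j \<le> 1" for t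
  proof -
    define w where "w j = (if j < m then 2/M else 1/M)" for j
    define y where "y j = (if j < m then t j *\<^sub>R p j + (1 - t j) *\<^sub>R q j else c0)" for j
    have "(\<Sum>j\<in>{..<Suc m}. w j *\<^sub>R y j) \<in> F"
    proof (rule convex_sum[OF _ cvx])
      have "(\<Sum>j<m. w j) = real m * (2/M)" unfolding w_def by simp
      then show "sum w {..<Suc m} = 1" unfolding w_def M_def by (simp add: field_simps)
      show "0 \<le> w i" for i unfolding w_def using M by simp
      fix i assume "i \<in> {..<Suc m}"
      show "y i \<in> F"
      proof (cases "i < m")
        case True
        then have "t i *\<^sub>R p i + (1 - t i) *\<^sub>R q i \<in> F"
          using t pq by (intro convexD[OF cvx]) auto
        then show ?thesis unfolding y_def using True by simp
      qed (use c0 y_def in auto)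
    qed auto
    moreover have "(\<Sum>j\<in>{..<Suc m}. w j *\<^sub>R y j) = cc t"
      unfolding cc_def w_def y_def by (simp add: add.commute)
    ultimately show ?thesis by simp
  qed
  define c where "c = cc (\<lambda>_. 1/2)"
  define c' where "c' = cc \<theta>"
  have cF: "c \<in> F" unfolding c_def by (rule cc_in) simp
  have c'F: "c' \<in> F" unfolding c'_def by (rule cc_in) (use th in auto)
  have dif: "c' - c = (\<Sum>j<m. a j *\<^sub>R (p j - q j))"
  proof -
    have "c' - c = (\<Sum>j<m. (2/M) *\<^sub>R (\<theta> j *\<^sub>R p j + (1 - \<theta> j) *\<^sub>R q j) - (2/M) *\<^sub>R ((1/2) *\<^sub>R p j + (1 - 1/2) *\<^sub>R q j))"
      unfolding c'_def c_def cc_def by (simp add: sum_subtractf)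
    also have "\<dots> = (\<Sum>j<m. a j *\<^sub>R (p j - q j))"
    proof (rule sum.cong[OF refl])
      fix j
      have "(2/M) * (\<theta> j - 1/2) = a j" unfolding \<theta>_def using M by (simp add: field_simps)
      then show "(2/M) *\<^sub>R (\<theta> j *\<^sub>R p j + (1 - \<theta> j) *\<^sub>R q j) - (2/M) *\<^sub>R ((1/2) *\<^sub>R p j + (1 - 1/2) *\<^sub>R q j)
          = a j *\<^sub>R (p j - q j)"
      proof -
        have "\<theta> j *\<^sub>R p j + (1 - \<theta> j) *\<^sub>R q j - ((1/2) *\<^sub>R p j + (1 - 1/2) *\<^sub>R q j)
            = (\<theta> j - 1/2) *\<^sub>R (p j - q j)"
          by (simp add: algebra_simps flip: scaleR_add_left)
        then have "(2/M) *\<^sub>R (\<theta> j *\<^sub>R p j + (1 - \<theta> j) *\<^sub>R q j) - (2/M) *\<^sub>R ((1/2) *\<^sub>R p j + (1 - 1/2) *\<^sub>R q j)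
            = (2/M) *\<^sub>R ((\<theta> j - 1/2) *\<^sub>R (p j - q j))" by (simp only: scaleR_diff_right[symmetric])
        also have "\<dots> = a j *\<^sub>R (p j - q j)" using \<open>(2/M) * (\<theta> j - 1/2) = a j\<close> by simp
        finally show ?thesis .
      qed
    qed
    finally show ?thesis .
  qed
  define f1 where "f1 = (1 - la) *\<^sub>R f + la *\<^sub>R c"
  define g1 where "g1 = (1 - la) *\<^sub>R g + la *\<^sub>R c'"
  have f1F: "f1 \<in> F" unfolding f1_def using lam f cF by (intro convexD[OF cvx]) auto
  have g1F: "g1 \<in> F" unfolding g1_def using lam g c'F by (intro convexD[OF cvx]) auto
  have Leq: "L i f1 = L i g1" if i: "i < n" for i
  proof -
    have lin: "linear (L i)" using Lb i bounded_linear.linear by blast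
    have Ld: "L i c' - L i c = (\<Sum>j<m. a j * L i (p j - q j))"
    proof -
      have "L i c' - L i c = L i (\<Sum>j<m. a j *\<^sub>R (p j - q j))" using linear_diff[OF lin, of c' c] dif by simp
      also have "\<dots> = (\<Sum>j<m. L i (a j *\<^sub>R (p j - q j)))" by (rule linear_sum[OF lin])
      also have "\<dots> = (\<Sum>j<m. a j * L i (p j - q j))" using linear_scale[OF lin] by simp
      finally show ?thesis .
    qed
    also have "\<dots> = \<mu> * (\<Sum>j<m. \<Lambda> j (f - g) * L i (p j - q j))"
    proof -
      have "\<And>j. j < m \<Longrightarrow> a j * L i (p j - q j) = \<mu> * (\<Lambda> j (f - g) * L i (p j - q j))"
      proof -
        fix j assume "j < m"
        then have "\<Lambda> j (f - g) = \<Lambda> j f - \<Lambda> j g"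
          using Llin linear_diff[OF bounded_linear.linear] by blast
        then show "a j * L i (p j - q j) = \<mu> * (\<Lambda> j (f - g) * L i (p j - q j))"
          unfolding a_def by simp
      qed
      then have "(\<Sum>j<m. a j * L i (p j - q j)) = (\<Sum>j<m. \<mu> * (\<Lambda> j (f - g) * L i (p j - q j)))"
        by (intro sum.cong) auto
      then show ?thesis by (simp add: sum_distrib_left)
    qed
    also have "\<dots> = \<mu> * (L i f - L i g)"
    proof -
      have "L i (f - g) = (\<Sum>j<m. \<Lambda> j (f - g) * L i (p j - q j))" using rep f g i by blast
      then show ?thesis using linear_diff[OF lin, of f g] by simp
    qed
    finally have Ld: "L i c' - L i c = \<mu> * (L i f - L i g)" .
    have "L i f1 - L i g1 = (1 - la) * (L i f - L i g) - la * (L i c' - L i c)"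
    proof -
      have "L i f1 = (1 - la) * L i f + la * L i c" unfolding f1_def by (simp add: linear_add[OF lin] linear_scale[OF lin])
      moreover have "L i g1 = (1 - la) * L i g + la * L i c'" unfolding g1_def by (simp add: linear_add[OF lin] linear_scale[OF lin])
      ultimately show ?thesis by (simp add: algebra_simps)
    qed
    also have "\<dots> = ((1 - la) - la * \<mu>) * (L i f - L i g)" unfolding Ld by (simp add: algebra_simps)
    also have "\<dots> = 0" using lm by simp
    finally show ?thesis by simp
  qed
  have meq: "map (\<lambda>i. L i f1) [0..<n] = map (\<lambda>i. L i g1) [0..<n]"
    by (rule map_cong) (auto intro: Leq)
  define v where "v = \<phi> (map (\<lambda>i. L i f1) [0..<n])"
  have e1: "norm (S f1 - v) \<le> e" using err f1F unfolding v_def by auto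
  have e2: "norm (S g1 - v) \<le> e" using err g1F unfolding v_def meq by auto
  have Slin: "linear S" using S bounded_linear.linear by blast
  have Sf1: "S f - S f1 = la *\<^sub>R (S f - S c)"
  proof -
    have "S f1 = (1 - la) *\<^sub>R S f + la *\<^sub>R S c" unfolding f1_def by (simp add: linear_add[OF Slin] linear_scale[OF Slin])
    then show ?thesis by (simp add: algebra_simps)
  qed
  have Sg1: "S g1 - S g = la *\<^sub>R (S c' - S g)"
  proof -
    have "S g1 = (1 - la) *\<^sub>R S g + la *\<^sub>R S c'" unfolding g1_def by (simp add: linear_add[OF Slin] linear_scale[OF Slin])
    then show ?thesis by (simp add: algebra_simps)
  qed
  have n1: "norm (S f - S f1) \<le> la * B" unfolding Sf1 using B f cF lam by (simp add: mult_left_mono)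
  have n2: "norm (S g1 - S g) \<le> la * B" unfolding Sg1 using B g c'F lam by (simp add: mult_left_mono)
  have "S f - S g = (S f - S f1) + (S f1 - v) - (S g1 - v) + (S g1 - S g)" by simp
  then have "norm (S f - S g) \<le> norm (S f - S f1) + norm (S f1 - v) + norm (S g1 - v) + norm (S g1 - S g)"
  proof -
    have "norm ((S f - S f1) + (S f1 - v) - (S g1 - v) + (S g1 - S g))
        \<le> norm ((S f - S f1) + (S f1 - v) - (S g1 - v)) + norm (S g1 - S g)" by (rule norm_triangle_ineq)
    also have "norm ((S f - S f1) + (S f1 - v) - (S g1 - v)) \<le> norm ((S f - S f1) + (S f1 - v)) + norm (S g1 - v)"
      by (rule norm_triangle_ineq4)
    also have "norm ((S f - S f1) + (S f1 - v)) \<le> norm (S f - S f1) + norm (S f1 - v)" by (rule norm_triangle_ineq)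
    finally have "norm ((S f - S f1) + (S f1 - v) - (S g1 - v) + (S g1 - S g)) \<le> norm (S f - S f1) + norm (S f1 - v) + norm (S g1 - v) + norm (S g1 - S g)" by linarith
    then show ?thesis using \<open>S f - S g = _\<close> by metis
  qed
  then show ?thesis using n1 n2 e1 e2 by linarith
qed

lemma floor_close:
  fixes x y \<delta> :: real
  assumes "\<delta> > 0" "\<lfloor>x / \<delta>\<rfloor> = \<lfloor>y / \<delta>\<rfloor>"
  shows "\<bar>x - y\<bar> \<le> \<delta>"
proof -
  define k where "k = \<lfloor>x / \<delta>\<rfloor>"
  have a: "of_int k \<le> x / \<delta>" "x / \<delta> < of_int k + 1"
    unfolding k_def by (rule of_int_floor_le, rule real_of_int_floor_add_one_gt)
  have b: "of_int k \<le> y / \<delta>" "y / \<delta> < of_int k + 1"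
    unfolding k_def assms(2) by (rule of_int_floor_le, rule real_of_int_floor_add_one_gt)
  have "\<bar>x / \<delta> - y / \<delta>\<bar> \<le> 1" using a b by (simp add: abs_le_iff)
  then have "\<bar>(x - y) / \<delta>\<bar> \<le> 1" by (simp add: diff_divide_distrib)
  then have "\<bar>x - y\<bar> / \<delta> \<le> 1" using assms(1) by (simp add: abs_divide)
  then show ?thesis using assms(1) by (simp add: pos_divide_le_eq)
qed

lemma floor_set:
  fixes \<delta> :: real and k :: int
  assumes "\<delta> > 0"
  shows "{x. \<lfloor>x / \<delta>\<rfloor> = k} = {of_int k * \<delta> ..< (of_int k + 1) * \<delta>}"
proof -
  have "\<lfloor>x / \<delta>\<rfloor> = k \<longleftrightarrow> of_int k * \<delta> \<le> x \<and> x < (of_int k + 1) * \<delta>" for x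
  proof -
    have 1: "(of_int k \<le> x / \<delta>) = (of_int k * \<delta> \<le> x)" by (rule pos_le_divide_eq[OF assms])
    have 2: "(x / \<delta> < of_int k + 1) = (x < (of_int k + 1) * \<delta>)" by (rule pos_divide_less_eq[OF assms])
    show ?thesis unfolding floor_eq_iff 1 2 ..
  qed
  then show ?thesis by (simp add: set_eq_iff)
qed
lemma sets_INT_lessThan:
  fixes m :: nat
  assumes "\<forall>j<m. X j \<inter> space M \<in> sets M"
  shows "space M \<inter> (\<Inter>j<m. X j) \<in> sets M"
  using assms
proof (induction m)
  case 0 then show ?case by simp
next
  case (Suc m)
  have "space M \<inter> (\<Inter>j<Suc m. X j) = (X m \<inter> space M) \<inter> (space M \<inter> (\<Inter>j<m. X j))"
    by (auto simp: lessThan_Suc)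
  also have "\<dots> \<in> sets M" by (rule sets.Int) (use Suc in auto)
  finally show ?case .
qed

lemma half_ennreal: "inverse 2 * (2::ennreal) = 1"
proof -
  have "(2::ennreal) / 2 = 1" by (rule ennreal_divide_self) auto
  then show ?thesis by (simp add: divide_ennreal_def mult.commute)
qed

lemma map_upt_eq_iff:
  assumes "length \<kappa> = m"
  shows "(map g [0..<m] = \<kappa>) \<longleftrightarrow> (\<forall>j<m. g j = \<kappa> ! j)"
  using assms by (auto simp: list_eq_iff_nth_eq)

lemma main_step:
  fixes S :: "'a::real_normed_vector \<Rightarrow> 'b::real_normed_vector" and F :: "'a set" and n :: nat
  assumes S: "bounded_linear S" and bF: "bounded F" and cvx: "convex F"
    and A: "A \<in> det_non_algs n" and Wfin: "worst_err S F A = ennreal e" and e0: "0 \<le> e" and eta: "\<eta> > 0"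
  shows "e_det_non_mb n S F \<le> ennreal (2 * e + \<eta>)"
proof -
  obtain \<phi> L where AL: "A = (\<lambda>f. \<phi> (map (\<lambda>i. L i f) [0..<n]))" and Lb: "\<forall>i<n. bounded_linear (L i :: 'a \<Rightarrow> real)"
    using A unfolding det_non_algs_def by blast
  have err: "\<forall>f\<in>F. norm (S f - \<phi> (map (\<lambda>i. L i f) [0..<n])) \<le> e"
  proof
    fix f assume "f \<in> F"
    then have "ennreal (norm (S f - A f)) \<le> worst_err S F A" unfolding worst_err_def by (rule SUP_upper)
    then show "norm (S f - \<phi> (map (\<lambda>i. L i f) [0..<n])) \<le> e" using Wfin e0 AL by (simp add: ennreal_le_iff)
  qed
  show ?thesis
  proof (cases "F = {}")
    case True
    have "F_measurable F A" unfolding F_measurable_def borel_F_def using True by (auto intro: sigma_sets.Empty)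
    then have "e_det_non_mb n S F \<le> worst_err S F A" unfolding e_det_non_mb_def using A by (auto intro: INF_lower)
    also have "\<dots> = 0" unfolding worst_err_def using True by (simp add: bot_ennreal)
    finally show ?thesis by simp
  next
    case False
    then obtain c0 where c0: "c0 \<in> F" by blast
    obtain m :: nat and u \<Lambda> where H1: "\<forall>j<m. u j \<in> diffset F \<and> \<Lambda> j \<in> LC L n"
      and H2: "\<forall>w\<in>diffset F. \<forall>i<n. L i w = (\<Sum>j<m. \<Lambda> j w * L i (u j))"
      using reduce[of "diffset F" L n] by blast
    have "\<forall>j. \<exists>ab. j < m \<longrightarrow> fst ab \<in> F \<and> snd ab \<in> F \<and> u j = fst ab - snd ab"
      using H1 unfolding diffset_def by force
    then obtain pq where pq0: "\<forall>j. j < m \<longrightarrow> fst (pq j) \<in> F \<and> snd (pq j) \<in> F \<and> u j = fst (pq j) - snd (pq j)"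
      by metis
    define p where "p j = fst (pq j)" for j
    define q where "q j = snd (pq j)" for j
    have pq: "\<forall>j<m. p j \<in> F \<and> q j \<in> F" and upq: "\<forall>j<m. u j = p j - q j" using pq0 unfolding p_def q_def by auto
    have "\<forall>j. \<exists>b. j < m \<longrightarrow> (\<forall>w. \<Lambda> j w = (\<Sum>k<n. b k * L k w))"
      using H1 unfolding LC_def by auto
    then obtain \<beta> where \<beta>: "\<forall>j. j < m \<longrightarrow> (\<forall>w. \<Lambda> j w = (\<Sum>k<n. \<beta> j k * L k w))" by metis
    have Llin: "\<forall>j<m. bounded_linear (\<Lambda> j)" using H1 Lb LC_bl by blast
    have rep: "\<forall>f\<in>F. \<forall>g\<in>F. \<forall>i<n. L i (f - g) = (\<Sum>j<m. \<Lambda> j (f - g) * L i (p j - q j))"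
    proof (intro ballI allI impI)
      fix f g i assume "f \<in> F" "g \<in> F" "i < n"
      then have "f - g \<in> diffset F" unfolding diffset_def by auto
      then have "L i (f - g) = (\<Sum>j<m. \<Lambda> j (f - g) * L i (u j))" using H2 \<open>i < n\<close> by blast
      also have "\<dots> = (\<Sum>j<m. \<Lambda> j (f - g) * L i (p j - q j))" using upq by (intro sum.cong) auto
      finally show "L i (f - g) = (\<Sum>j<m. \<Lambda> j (f - g) * L i (p j - q j))" .
    qed
    obtain R' where R': "\<forall>y\<in>S ` F. norm y \<le> R'"
      using bounded_linear_image[OF bF S] bounded_iff by blast
    define B where "B = 2 * R'"
    have B: "\<forall>x\<in>F. \<forall>y\<in>F. norm (S x - S y) \<le> B"
    proof (intro ballI)
      fix x y assume "x \<in> F" "y \<in> F"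
      then have "norm (S x) \<le> R'" "norm (S y) \<le> R'" using R' by auto
      then show "norm (S x - S y) \<le> B" unfolding B_def using norm_triangle_ineq4[of "S x" "S y"] by linarith
    qed
    have B0: "B \<ge> 0" using B c0 norm_ge_zero order_trans by blast
    define la where "la = \<eta> / (2 * B + 2 * \<eta>)"
    have den: "2 * B + 2 * \<eta> > 0" using B0 eta by linarith
    have la1: "0 < la" unfolding la_def by (rule divide_pos_pos[OF eta den])
    have la2: "la < 1" unfolding la_def using divide_less_eq_1_pos[OF den, of \<eta>] B0 eta by linarith
    have la: "0 < la" "la < 1" using la1 la2 by auto
    have laB: "2 * la * B \<le> \<eta>"
    proof -
      have q: "(2 * B) / (2 * B + 2 * \<eta>) \<le> 1" using divide_le_eq_1_pos[OF den, of "2*B"] B0 eta by linarith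
      have "2 * la * B = \<eta> * ((2 * B) / (2 * B + 2 * \<eta>))" unfolding la_def by simp
      also have "\<dots> \<le> \<eta> * 1" using q eta by (intro mult_left_mono) auto
      finally show ?thesis by simp
    qed
    define \<mu> where "\<mu> = (1 - la) / la"
    define \<delta> where "\<delta> = 1 / ((2 * real m + 1) * \<mu>)"
    have la3: "0 < 1 - la" using la by linarith
    have mu0: "\<mu> > 0" unfolding \<mu>_def by (rule divide_pos_pos[OF la3 la(1)])
    have mpos: "0 < 2 * real m + 1" by linarith
    have mm: "0 < (2 * real m + 1) * \<mu>" by (rule mult_pos_pos[OF mpos mu0])
    have dpos: "\<delta> > 0" unfolding \<delta>_def by (rule divide_pos_pos[OF zero_less_one mm])
    define key where "key f = map (\<lambda>j. \<lfloor>\<Lambda> j f / \<delta>\<rfloor>) [0..<m]" for f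
    define keyL where "keyL ys = map (\<lambda>j. \<lfloor>(\<Sum>k<n. \<beta> j k * ys ! k) / \<delta>\<rfloor>) [0..<m]" for ys :: "real list"
    have keyeq: "keyL (map (\<lambda>i. L i f) [0..<n]) = key f" for f
      unfolding keyL_def key_def
    proof (rule map_cong[OF refl])
      fix j assume "j \<in> set [0..<m]"
      then have "\<Lambda> j f = (\<Sum>k<n. \<beta> j k * L k f)" using \<beta> by auto
      also have "\<dots> = (\<Sum>k<n. \<beta> j k * map (\<lambda>i. L i f) [0..<n] ! k)" by (intro sum.cong) auto
      finally show "\<lfloor>(\<Sum>k<n. \<beta> j k * map (\<lambda>i. L i f) [0..<n] ! k) / \<delta>\<rfloor> = \<lfloor>\<Lambda> j f / \<delta>\<rfloor>" by simp
    qed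
    define h where "h \<kappa> = (if \<exists>g\<in>F. key g = \<kappa> then S (SOME g. g \<in> F \<and> key g = \<kappa>) else 0)" for \<kappa>
    define A' where "A' = (\<lambda>f. h (keyL (map (\<lambda>i. L i f) [0..<n])))"
    have A'eq: "A' = (\<lambda>f. h (key f))" unfolding A'_def keyeq ..
    have A'alg: "A' \<in> det_non_algs n"
      unfolding det_non_algs_def A'_def using Lb
      by (intro CollectI exI[of _ "\<lambda>ys. h (keyL ys)"] exI[of _ L] conjI) auto
    have close: "norm (S f - S g) \<le> 2 * e + 2 * la * B" if "f \<in> F" "g \<in> F" "key f = key g" for f g
    proof (rule close_lemma[OF S Lb cvx c0 pq rep Llin err B la \<mu>_def \<delta>_def that(1,2)])
      show "\<forall>j<m. \<bar>\<Lambda> j f - \<Lambda> j g\<bar> \<le> \<delta>"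
      proof (intro allI impI)
        fix j assume "j < m"
        then have "\<lfloor>\<Lambda> j f / \<delta>\<rfloor> = \<lfloor>\<Lambda> j g / \<delta>\<rfloor>" using that(3) unfolding key_def
          by (metis (no_types, lifting) add_0 diff_zero nth_map_upt)
        then show "\<bar>\<Lambda> j f - \<Lambda> j g\<bar> \<le> \<delta>" using floor_close dpos by blast
      qed
    qed
    have errA': "norm (S f - A' f) \<le> 2 * e + \<eta>" if f: "f \<in> F" for f
    proof -
      have ex: "\<exists>g. g \<in> F \<and> key g = key f" using f by blast
      define g where "g = (SOME g. g \<in> F \<and> key g = key f)"
      have g: "g \<in> F" "key g = key f" using someI_ex[OF ex] unfolding g_def by auto
      have exb: "\<exists>g\<in>F. key g = key f" using f by blast
      have Af: "A' f = S g" unfolding A'eq h_def g_def by (rule if_P[OF exb])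
      have "norm (S f - S g) \<le> 2 * e + 2 * la * B" by (rule close[OF f g(1) g(2)[symmetric]])
      then have "norm (S f - A' f) \<le> 2 * e + 2 * la * B" unfolding Af .
      then show ?thesis using laB by linarith
    qed
    have meas: "F_measurable F A'"
    proof (rule MF_F_measurable)
      have keym: "key \<in> MF F \<rightarrow>\<^sub>M count_space UNIV"
      proof (subst measurable_count_space_eq2_countable, intro conjI ballI)
        show "key \<in> space (MF F) \<rightarrow> UNIV" by simp
        fix \<kappa> :: "int list"
        show "key -` {\<kappa>} \<inter> space (MF F) \<in> sets (MF F)"
        proof (cases "length \<kappa> = m")
          case False
          then have "key -` {\<kappa>} \<inter> space (MF F) = {}" unfolding key_def by auto
          then show ?thesis by simp
        next
          case True
          have "key -` {\<kappa>} \<inter> space (MF F) = space (MF F) \<inter> (\<Inter>j<m. {f. \<lfloor>\<Lambda> j f / \<delta>\<rfloor> = \<kappa> ! j})"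
            by (rule set_eqI) (auto simp: key_def map_upt_eq_iff[OF True])
          also have "\<dots> \<in> sets (MF F)"
          proof (rule sets_INT_lessThan, intro allI impI)
            fix j assume "j < m"
            have "{f. \<lfloor>\<Lambda> j f / \<delta>\<rfloor> = \<kappa> ! j} \<inter> space (MF F)
                = \<Lambda> j -` {of_int (\<kappa> ! j) * \<delta> ..< (of_int (\<kappa> ! j) + 1) * \<delta>} \<inter> space (MF F)"
              using floor_set[OF dpos, of "\<kappa> ! j"] by auto
            also have "\<dots> \<in> sets (MF F)"
              using MF_meas[OF _ bF] Llin \<open>j < m\<close> by (intro measurable_sets[OF _ atLeastLessThan_borel]) auto
            finally show "{f. \<lfloor>\<Lambda> j f / \<delta>\<rfloor> = \<kappa> ! j} \<inter> space (MF F) \<in> sets (MF F)" .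
          qed
          finally show ?thesis .
        qed
      qed
      have hm: "h \<in> count_space UNIV \<rightarrow>\<^sub>M borel" by (simp add: measurable_count_space_eq1)
      show "A' \<in> borel_measurable (MF F)" unfolding A'eq using measurable_compose[OF keym hm] .
    qed
    have "e_det_non_mb n S F \<le> worst_err S F A'"
      unfolding e_det_non_mb_def using A'alg meas by (auto intro: INF_lower)
    also have "\<dots> \<le> ennreal (2 * e + \<eta>)"
      unfolding worst_err_def using errA' by (auto intro!: SUP_least ennreal_leI)
    finally show ?thesis .
  qed
qed

theorem lemma6p2:
  fixes S :: "'a::banach \<Rightarrow> 'b::banach" and F :: "'a set" and n :: nat
  assumes "bounded_linear S" and "bounded F" and "convex F"
  shows "e_det_non_mb n S F \<le> 8 * e_det_non n S F"
proof -
  have step: "e_det_non_mb n S F \<le> 2 * worst_err S F A" if A: "A \<in> det_non_algs n" for A :: "'a \<Rightarrow> 'b"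
  proof (cases "worst_err S F A = top")
    case True
    then show ?thesis by simp
  next
    case False
    then obtain e where e: "worst_err S F A = ennreal e" "0 \<le> e" by (cases "worst_err S F A") auto
    show ?thesis
    proof (rule ennreal_le_epsilon)
      fix \<eta> :: real assume "0 < \<eta>"
      then have "e_det_non_mb n S F \<le> ennreal (2 * e + \<eta>)"
        using main_step[OF assms A e(1) e(2)] by blast
      also have "\<dots> = 2 * worst_err S F A + ennreal \<eta>"
        using e \<open>0 < \<eta>\<close> by (simp add: ennreal_plus ennreal_mult)
      finally show "e_det_non_mb n S F \<le> 2 * worst_err S F A + ennreal \<eta>" .
    qed
  qed
  have "inverse 2 * e_det_non_mb n S F \<le> e_det_non n S F"
    unfolding e_det_non_def
  proof (rule INF_greatest)
    fix A :: "'a \<Rightarrow> 'b" assume A: "A \<in> det_non_algs n"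
    have "inverse 2 * e_det_non_mb n S F \<le> inverse 2 * (2 * worst_err S F A)"
      using step[OF A] by (rule mult_left_mono) simp
    also have "\<dots> = (inverse 2 * 2) * worst_err S F A" by (simp only: mult.assoc)
    also have "\<dots> = worst_err S F A" by (simp only: half_ennreal mult_1)
    finally show "inverse 2 * e_det_non_mb n S F \<le> worst_err S F A" .
  qed
  then have "2 * (inverse 2 * e_det_non_mb n S F) \<le> 2 * e_det_non n S F" by (rule mult_left_mono) simp
  then have "e_det_non_mb n S F \<le> 2 * e_det_non n S F"
    by (simp only: mult.assoc[symmetric] mult.commute[of 2 "inverse 2"] half_ennreal mult_1)
  also have "\<dots> \<le> 8 * e_det_non n S F" by (rule mult_right_mono) auto
  finally show ?thesis .
qed

end
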